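(* Let $K\ge1$, $N=2^K-1$ and $\mu>0$. For the $(N,K)$ binary simplex coded system with node service rate $\mu$, the maximum of $\lambda_1+\dots+\lambda_K$ over all vectors $(\lambda_1,\dots,\lambda_K)$ in its service capacity region equals $2^{K-1}\mu$.
   Context: Binary simplex coded system: $K$ files $f_1,\dots,f_K$ of equal size (elements of a vector space over a field of characteristic $2$) are stored on $N=2^K-1$ nodes indexed by the nonzero vectors $v\in\mathbb{F}_2^K$, node $v$ storing $\sum_{j=1}^K v_jf_j$. Each node has service rate $\mu$. Let $e_i$ be the $i$-th standard basis vector. The recovering sets of file $f_i$ are the systematic node $\{e_i\}$ and the $2^{K-1}-1$ disjoint repair groups $\{v,v+e_i\}$, $v\in\mathbb{F}_2^K\setminus\{0,e_i\}$ (each unordered pair counted once). Requests for $f_i$ arrive at rate $\lambda_i\ge0$. The service capacity region is the set of vectors $(\lambda_1,\dots,\lambda_K)$ for which there exist nonnegative rates assigned to the recovering sets of each $f_i$, summing to $\lambda_i$ for every $i$, such that for every node the total rate assigned to recovering sets containing that node is at most $\mu$. *)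

theory Defs
  imports Complex_Main
begin

text \<open>Vectors of F_2^K are encoded as subsets of {..<K} (support); addition is
  symmetric difference. Files/coordinates are indexed 0..K-1.\<close>

definition vadd :: "nat set \<Rightarrow> nat set \<Rightarrow> nat set" where
  "vadd u v = (u - v) \<union> (v - u)"

definition nodes :: "nat \<Rightarrow> nat set set" where
  "nodes K = {v. v \<subseteq> {..<K} \<and> v \<noteq> {}}"

definition unitvec :: "nat \<Rightarrow> nat set" where
  "unitvec i = {i}"

text \<open>Recovering sets of file i: the systematic node and the repair pairs
  {v, v + e_i} (unordered, hence counted once).\<close>
definition recsets :: "nat \<Rightarrow> nat \<Rightarrow> nat set set set" where
  "recsets K i = {{unitvec i}} \<union>
     {{v, vadd v (unitvec i)} | v. v \<in> nodes K \<and> v \<noteq> unitvec i}"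

definition capacity_region :: "nat \<Rightarrow> real \<Rightarrow> (nat \<Rightarrow> real) set" where
  "capacity_region K \<mu> = {lam. (\<forall>i<K. lam i \<ge> 0) \<and>
     (\<exists>x :: nat \<Rightarrow> nat set set \<Rightarrow> real.
        (\<forall>i<K. \<forall>R\<in>recsets K i. x i R \<ge> 0) \<and>
        (\<forall>i<K. (\<Sum>R\<in>recsets K i. x i R) = lam i) \<and>
        (\<forall>v\<in>nodes K. (\<Sum>i<K. \<Sum>R\<in>{R\<in>recsets K i. v \<in> R}. x i R) \<le> \<mu>))}"

end

theory Submission
  imports Defs
begin

definition Od :: "nat \<Rightarrow> nat set set" where
  "Od K = {v \<in> nodes K. odd (card v)}"

lemma vadd_invol: "vadd (vadd w a) a = w"
  unfolding vadd_def by auto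

lemma vadd_single: "vadd v {i} = (if i \<in> v then v - {i} else insert i v)"
  unfolding vadd_def by auto

lemma finite_nodes: "finite (nodes K)"
proof -
  have "nodes K \<subseteq> Pow {..<K}" unfolding nodes_def by auto
  thus ?thesis by (rule finite_subset) simp
qed

lemma finite_recsets: "finite (recsets K i)"
proof -
  have "recsets K i \<subseteq> Pow (Pow (insert i {..<K}))"
    unfolding recsets_def unitvec_def nodes_def vadd_def by auto
  thus ?thesis by (rule finite_subset) simp
qed

lemma vadd_nodes:
  assumes "v \<in> nodes K" "v \<noteq> {i}" "i < K"
  shows "vadd v {i} \<in> nodes K"
  using assms unfolding nodes_def vadd_single by auto

lemma card_vadd:
  assumes "finite v"
  shows "odd (card (vadd v {i})) \<longleftrightarrow> \<not> odd (card v)"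
proof (cases "i \<in> v")
  case True
  then have "card v = Suc (card (v - {i}))" using assms
    by (metis card_Suc_Diff1)
  then show ?thesis using True by (simp add: vadd_single)
next
  case False
  then show ?thesis using assms by (simp add: vadd_single)
qed

lemma rec_odd:
  assumes "i < K" "R \<in> recsets K i"
  shows "card {v \<in> Od K. v \<in> R} = 1"
proof -
  from assms(2) consider "R = {{i}}"
    | v where "R = {v, vadd v {i}}" "v \<in> nodes K" "v \<noteq> {i}"
    unfolding recsets_def unitvec_def by auto
  then show ?thesis
  proof cases
    case 1
    then have "{v \<in> Od K. v \<in> R} = {{i}}" using assms(1)
      unfolding Od_def nodes_def by auto
    then show ?thesis by simp
  next
    case 2
    have fv: "finite v" using 2(2) unfolding nodes_def by (auto intro: finite_subset)
    have w: "vadd v {i} \<in> nodes K" using vadd_nodes 2 assms(1) by blast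
    have ne: "vadd v {i} \<noteq> v" unfolding vadd_single by auto
    show ?thesis
    proof (cases "odd (card v)")
      case True
      then have "{u \<in> Od K. u \<in> R} = {v}" using 2 w card_vadd[OF fv, of i]
        unfolding Od_def by auto
      then show ?thesis by simp
    next
      case False
      then have "{u \<in> Od K. u \<in> R} = {vadd v {i}}" using 2 w card_vadd[OF fv, of i]
        unfolding Od_def by auto
      then show ?thesis by simp
    qed
  qed
qed

lemma rec_sub: "i < K \<Longrightarrow> R \<in> recsets K i \<Longrightarrow> R \<subseteq> nodes K"
  unfolding recsets_def unitvec_def using vadd_nodes
  by (auto simp: nodes_def)

lemma double_count:
  fixes x :: "nat set set \<Rightarrow> real"
  assumes "i < K"
  shows "(\<Sum>R\<in>recsets K i. x R) = (\<Sum>v\<in>Od K. \<Sum>R\<in>{R\<in>recsets K i. v\<in>R}. x R)"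
proof -
  have fO: "finite (Od K)" using finite_nodes unfolding Od_def by auto
  have "(\<Sum>R\<in>recsets K i. x R) = (\<Sum>R\<in>recsets K i. \<Sum>v\<in>{v \<in> Od K. v \<in> R}. x R)"
    using rec_odd[OF assms] by simp
  also have "\<dots> = (\<Sum>v\<in>Od K. \<Sum>R\<in>{R\<in>recsets K i. v\<in>R}. x R)"
    by (rule sum.swap_restrict[OF finite_recsets fO])
  finally show ?thesis .
qed

lemma rec0_unique:
  assumes "v \<in> nodes K" "K \<ge> 1"
  shows "card {R \<in> recsets K 0. v \<in> R} = 1"
proof -
  define P where "P = (if v = {0} then {{0::nat}} else {v, vadd v {0}})"
  have "{R \<in> recsets K 0. v \<in> R} = {P}"
  proof (rule set_eqI, rule iffI)
    fix R assume "R \<in> {R \<in> recsets K 0. v \<in> R}"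
    then have R: "R \<in> recsets K 0" "v \<in> R" by auto
    from R(1) consider "R = {{0}}"
      | w where "R = {w, vadd w {0}}" "w \<in> nodes K" "w \<noteq> {0}"
      unfolding recsets_def unitvec_def by auto
    then show "R \<in> {P}"
    proof cases
      case 1 then show ?thesis using R(2) by (simp add: P_def)
    next
      case 2
      have "w \<noteq> {}" using 2(2) unfolding nodes_def by auto
      then have "vadd w {0} \<noteq> {0}" unfolding vadd_single by auto
      then show ?thesis using R(2) 2 vadd_invol[of w "{0}"]
        by (auto simp: P_def insert_commute)
    qed
  next
    fix R assume "R \<in> {P}"
    then have "R = P" by simp
    moreover have "P \<in> recsets K 0"
      using assms unfolding P_def recsets_def unitvec_def by auto
    moreover have "v \<in> P" unfolding P_def by auto
    ultimately show "R \<in> {R \<in> recsets K 0. v \<in> R}" by simp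
  qed
  then show ?thesis by simp
qed

lemma card_Od:
  assumes "K \<ge> 1"
  shows "card (Od K) = 2 ^ (K - 1)"
proof -
  define E where "E = {v. v \<subseteq> {..<K} \<and> even (card v)}"
  define Os where "Os = {v. v \<subseteq> {..<K} \<and> odd (card v)}"
  have OdOs: "Od K = Os" unfolding Od_def Os_def nodes_def by auto
  have "Os \<subseteq> Pow {..<K}" "E \<subseteq> Pow {..<K}" unfolding Os_def E_def by auto
  then have fin: "finite Os" "finite E" by (auto intro: finite_subset)
  have "bij_betw (\<lambda>v. vadd v {0}) Os E"
  proof (rule bij_betw_byWitness[where f'="\<lambda>v. vadd v {0}"])
    show "(\<lambda>v. vadd v {0}) ` Os \<subseteq> E"
    proof
      fix w assume "w \<in> (\<lambda>v. vadd v {0}) ` Os"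
      then obtain v where v: "v \<in> Os" "w = vadd v {0}" by auto
      have fv: "finite v" using v(1) unfolding Os_def by (auto intro: finite_subset)
      have "w \<subseteq> {..<K}" using v assms unfolding Os_def E_def vadd_single
        by (auto split: if_splits)
      moreover have "even (card w)" using v(1) card_vadd[OF fv, of 0]
        unfolding v(2) Os_def E_def by simp
      ultimately show "w \<in> E" unfolding Os_def E_def by simp
    qed
    show "(\<lambda>v. vadd v {0}) ` E \<subseteq> Os"
    proof
      fix w assume "w \<in> (\<lambda>v. vadd v {0}) ` E"
      then obtain v where v: "v \<in> E" "w = vadd v {0}" by auto
      have fv: "finite v" using v(1) unfolding E_def by (auto intro: finite_subset)
      have "w \<subseteq> {..<K}" using v assms unfolding Os_def E_def vadd_single
        by (auto split: if_splits)
      moreover have "odd (card w)" using v(1) card_vadd[OF fv, of 0]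
        unfolding v(2) Os_def E_def by simp
      ultimately show "w \<in> Os" unfolding Os_def E_def by simp
    qed
  qed (simp_all add: vadd_invol)
  then have "card Os = card E" by (rule bij_betw_same_card)
  moreover have "card Os + card E = 2 ^ K"
  proof -
    have "Os \<union> E = Pow {..<K}" "Os \<inter> E = {}" unfolding Os_def E_def by auto
    then have "card (Pow {..<K}) = card Os + card E" using card_Un_disjoint[OF fin] by simp
    then show ?thesis by (simp add: card_Pow)
  qed
  ultimately have "2 * card Os = 2 ^ K" by simp
  moreover have "(2::nat) ^ K = 2 * 2 ^ (K - 1)" using assms
    by (cases K) auto
  ultimately show ?thesis using OdOs by simp
qed

theorem lemma3:
  fixes K :: nat and \<mu> :: real
  assumes "K \<ge> 1" and "\<mu> > 0"
  shows "(\<exists>lam\<in>capacity_region K \<mu>. (\<Sum>i<K. lam i) = 2 ^ (K - 1) * \<mu>) \<and>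
         (\<forall>lam\<in>capacity_region K \<mu>. (\<Sum>i<K. lam i) \<le> 2 ^ (K - 1) * \<mu>)"
proof
  define x :: "nat \<Rightarrow> nat set set \<Rightarrow> real" where "x = (\<lambda>i R. if i = 0 then \<mu> else 0)"
  define lam where "lam = (\<lambda>i. \<Sum>R\<in>recsets K i. x i R)"
  have load: "(\<Sum>i<K. \<Sum>R\<in>{R\<in>recsets K i. v \<in> R}. x i R) = \<mu>" if "v \<in> nodes K" for v
  proof -
    have "(\<Sum>i<K. \<Sum>R\<in>{R\<in>recsets K i. v \<in> R}. x i R)
        = (\<Sum>i<K. if i = 0 then \<mu> * card {R\<in>recsets K 0. v \<in> R} else 0)"
      by (rule sum.cong) (auto simp: x_def)
    also have "\<dots> = \<mu>" using assms(1) rec0_unique[OF that assms(1)] by simp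
    finally show ?thesis .
  qed
  have "lam \<in> capacity_region K \<mu>"
    unfolding capacity_region_def
  proof (intro CollectI conjI exI[of _ x])
    show "\<forall>i<K. 0 \<le> lam i" using assms(2) unfolding lam_def x_def
      by (auto intro: sum_nonneg)
    show "\<forall>i<K. \<forall>R\<in>recsets K i. 0 \<le> x i R" using assms(2) unfolding x_def by auto
    show "\<forall>i<K. (\<Sum>R\<in>recsets K i. x i R) = lam i" unfolding lam_def by simp
    show "\<forall>v\<in>nodes K. (\<Sum>i<K. \<Sum>R\<in>{R \<in> recsets K i. v \<in> R}. x i R) \<le> \<mu>"
      using load by simp
  qed
  moreover have "(\<Sum>i<K. lam i) = 2 ^ (K - 1) * \<mu>"
  proof -
    have "(\<Sum>i<K. lam i) = lam 0"
    proof -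
      have "(\<Sum>i<K. lam i) = (\<Sum>i<K. if i = 0 then lam 0 else 0)"
        by (rule sum.cong) (auto simp: lam_def x_def)
      also have "\<dots> = lam 0" using assms(1) by simp
      finally show ?thesis .
    qed
    also have "\<dots> = (\<Sum>v\<in>Od K. \<Sum>R\<in>{R\<in>recsets K 0. v\<in>R}. x 0 R)"
      unfolding lam_def by (rule double_count) (use assms(1) in simp)
    also have "\<dots> = (\<Sum>v\<in>Od K. \<mu>)"
    proof (rule sum.cong)
      fix v assume "v \<in> Od K"
      then have "v \<in> nodes K" unfolding Od_def by simp
      then show "(\<Sum>R\<in>{R\<in>recsets K 0. v\<in>R}. x 0 R) = \<mu>"
        using rec0_unique[OF _ assms(1)] by (simp add: x_def)
    qed simp
    also have "\<dots> = 2 ^ (K - 1) * \<mu>" using card_Od[OF assms(1)] by simp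
    finally show ?thesis .
  qed
  ultimately show "\<exists>lam\<in>capacity_region K \<mu>. (\<Sum>i<K. lam i) = 2 ^ (K - 1) * \<mu>" by blast
next
  show "\<forall>lam\<in>capacity_region K \<mu>. (\<Sum>i<K. lam i) \<le> 2 ^ (K - 1) * \<mu>"
  proof
    fix lam assume "lam \<in> capacity_region K \<mu>"
    then obtain x :: "nat \<Rightarrow> nat set set \<Rightarrow> real" where
      eq: "\<forall>i<K. (\<Sum>R\<in>recsets K i. x i R) = lam i" and
      ld: "\<forall>v\<in>nodes K. (\<Sum>i<K. \<Sum>R\<in>{R\<in>recsets K i. v \<in> R}. x i R) \<le> \<mu>"
      unfolding capacity_region_def by blast
    have "(\<Sum>i<K. lam i) = (\<Sum>i<K. \<Sum>v\<in>Od K. \<Sum>R\<in>{R\<in>recsets K i. v\<in>R}. x i R)"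
      by (rule sum.cong) (simp_all add: eq[rule_format, symmetric] double_count)
    also have "\<dots> = (\<Sum>v\<in>Od K. \<Sum>i<K. \<Sum>R\<in>{R\<in>recsets K i. v\<in>R}. x i R)"
      by (rule sum.swap)
    also have "\<dots> \<le> (\<Sum>v\<in>Od K. \<mu>)"
      by (rule sum_mono) (use ld in \<open>auto simp: Od_def\<close>)
    also have "\<dots> = 2 ^ (K - 1) * \<mu>" using card_Od[OF assms(1)] by simp
    finally show "(\<Sum>i<K. lam i) \<le> 2 ^ (K - 1) * \<mu>" .
  qed
qed

end
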